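(* Let $N\ge 3$, $a>0$, $T>0$, and let $u,v\in C^{2,1}([a,\infty)\times[0,T))$ be two classical solutions of $$w_t=w_{rr}+\frac{N+1}{r}w_r+(Nw+rw_r)w,\qquad (r,t)\in[a,\infty)\times[0,T).$$ Assume $u(r,0)<v(r,0)$ for $r\in[a,\infty)$, $u(a,t)<v(a,t)$ for $t\in[0,T)$, and that $u$, $v$, $rv_r$ are uniformly bounded in $[a,\infty)\times[0,T)$. Then $u(r,t)<v(r,t)$ for all $(r,t)\in[a,\infty)\times[0,T)$. *)

theory Defs
  imports "HOL-Analysis.Analysis"
begin

definition dom_aT :: "real \<Rightarrow> real \<Rightarrow> (real \<times> real) set" where
  "dom_aT a T = {a..} \<times> {0..<T}"

definition C21_on :: "real \<Rightarrow> real \<Rightarrow> (real \<Rightarrow> real \<Rightarrow> real) \<Rightarrow> (real \<Rightarrow> real \<Rightarrow> real)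
    \<Rightarrow> (real \<Rightarrow> real \<Rightarrow> real) \<Rightarrow> (real \<Rightarrow> real \<Rightarrow> real) \<Rightarrow> bool" where
  "C21_on a T w wr wrr wt \<longleftrightarrow>
     (\<forall>r t. (r, t) \<in> dom_aT a T \<longrightarrow>
        ((\<lambda>s. w s t) has_real_derivative wr r t) (at r within {a..}) \<and>
        ((\<lambda>s. wr s t) has_real_derivative wrr r t) (at r within {a..}) \<and>
        ((\<lambda>\<tau>. w r \<tau>) has_real_derivative wt r t) (at t within {0..<T})) \<and>
     continuous_on (dom_aT a T) (\<lambda>(r, t). w r t) \<and>
     continuous_on (dom_aT a T) (\<lambda>(r, t). wr r t) \<and>
     continuous_on (dom_aT a T) (\<lambda>(r, t). wrr r t) \<and>
     continuous_on (dom_aT a T) (\<lambda>(r, t). wt r t)"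

definition classical_sol :: "nat \<Rightarrow> real \<Rightarrow> real \<Rightarrow> (real \<Rightarrow> real \<Rightarrow> real) \<Rightarrow> (real \<Rightarrow> real \<Rightarrow> real)
    \<Rightarrow> (real \<Rightarrow> real \<Rightarrow> real) \<Rightarrow> (real \<Rightarrow> real \<Rightarrow> real) \<Rightarrow> bool" where
  "classical_sol N a T w wr wrr wt \<longleftrightarrow>
     C21_on a T w wr wrr wt \<and>
     (\<forall>r t. (r, t) \<in> dom_aT a T \<longrightarrow>
        wt r t = wrr r t + (real N + 1) / r * wr r t + (real N * w r t + r * wr r t) * w r t)"

end

theory Submission
  imports Defs
begin

lemma touch:
  fixes z zr zrr zt :: "real \<Rightarrow> real \<Rightarrow> real" and a R tmax :: real
  assumes aR: "a < R" and tmax: "0 \<le> tmax"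
  and cont: "continuous_on ({a..R} \<times> {0..tmax}) (\<lambda>p. z (fst p) (snd p))"
  and dr: "\<And>r t. a < r \<Longrightarrow> r < R \<Longrightarrow> 0 < t \<Longrightarrow> t \<le> tmax \<Longrightarrow> ((\<lambda>s. z s t) has_real_derivative zr r t) (at r)"
  and drr: "\<And>r t. a < r \<Longrightarrow> r < R \<Longrightarrow> 0 < t \<Longrightarrow> t \<le> tmax \<Longrightarrow> ((\<lambda>s. zr s t) has_real_derivative zrr r t) (at r)"
  and dt: "\<And>r t. a < r \<Longrightarrow> r < R \<Longrightarrow> 0 < t \<Longrightarrow> t \<le> tmax \<Longrightarrow> ((\<lambda>\<tau>. z r \<tau>) has_real_derivative zt r t) (at t)"
  and init: "\<And>r. a \<le> r \<Longrightarrow> r \<le> R \<Longrightarrow> z r 0 > 0"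
  and bdry: "\<And>t. 0 \<le> t \<Longrightarrow> t \<le> tmax \<Longrightarrow> z a t > 0 \<and> z R t > 0"
  and key: "\<And>r t. a < r \<Longrightarrow> r < R \<Longrightarrow> 0 < t \<Longrightarrow> t \<le> tmax \<Longrightarrow> z r t = 0 \<Longrightarrow> zr r t = 0 \<Longrightarrow> zt r t > zrr r t"
  and r: "a \<le> r" "r \<le> R" and t: "0 \<le> t" "t \<le> tmax"
  shows "z r t > 0"
proof (rule ccontr)
  assume neg: "\<not> z r t > 0"
  define K where "K = {a..R} \<times> {0..tmax}"
  define S where "S = K \<inter> (\<lambda>p. z (fst p) (snd p)) -` {..0}"
  have cK: "compact K" unfolding K_def by (intro compact_Times compact_Icc)
  have "closed S" unfolding S_def K_def by (rule continuous_closed_preimage[OF cont]) (auto intro: closed_Times)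
  moreover have "bounded S" using compact_imp_bounded[OF cK] unfolding S_def
    by (rule bounded_subset) auto
  ultimately have cS: "compact S" by (simp add: compact_eq_bounded_closed)
  have rtS: "(r, t) \<in> S" using neg r t unfolding S_def K_def by auto
  hence "S \<noteq> {}" by auto
  have "continuous_on S snd" by (intro continuous_intros)
  from continuous_attains_inf[OF cS \<open>S \<noteq> {}\<close> this]
  obtain p where p: "p \<in> S" "\<forall>q\<in>S. snd p \<le> snd q" by blast
  obtain rs ts where pe: "p = (rs, ts)" by (cases p)
  have rsts: "a \<le> rs" "rs \<le> R" "0 \<le> ts" "ts \<le> tmax" "z rs ts \<le> 0"
    using p(1) unfolding pe S_def K_def by auto
  have ts0: "ts > 0" using init[of rs] rsts by (cases "ts = 0") auto
  have rsa: "a < rs" using bdry[of ts] rsts by (cases "rs = a") auto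
  have rsR: "rs < R" using bdry[of ts] rsts by (cases "rs = R") auto
  have before: "z y \<tau> > 0" if "a \<le> y" "y \<le> R" "0 \<le> \<tau>" "\<tau> < ts" for y \<tau>
  proof (rule ccontr)
    assume "\<not> z y \<tau> > 0"
    hence "(y, \<tau>) \<in> S" using that rsts unfolding S_def K_def by auto
    with p(2) pe that show False by force
  qed
  have ge: "z y ts \<ge> 0" if "a < y" "y < R" for y
  proof -
    have "isCont (\<lambda>\<tau>. z y \<tau>) ts" using DERIV_isCont[OF dt[OF that ts0 rsts(4)]] .
    hence "((\<lambda>\<tau>. z y \<tau>) \<longlongrightarrow> z y ts) (at_left ts)"
      using isCont_def tendsto_mono[OF at_le[of "{..<ts}" UNIV]] by blast
    moreover have "eventually (\<lambda>\<tau>. 0 \<le> z y \<tau>) (at_left ts)"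
      using eventually_at_left_real[OF ts0]
      by eventually_elim (use before that in \<open>auto intro: less_imp_le\<close>)
    ultimately show ?thesis by (rule tendsto_lowerbound) simp
  qed
  have z0: "z rs ts = 0" using ge[OF rsa rsR] rsts by auto
  define d where "d = min (rs - a) (R - rs)"
  have d0: "d > 0" using rsa rsR d_def by auto
  have zr0: "zr rs ts = 0"
  proof (rule DERIV_local_min[OF dr[OF rsa rsR ts0 rsts(4)] d0], intro allI impI)
    fix y assume "\<bar>rs - y\<bar> < d"
    hence "a < y" "y < R" unfolding d_def by auto
    thus "z rs ts \<le> z y ts" using ge z0 by auto
  qed
  have zt0: "zt rs ts \<le> 0"
  proof (rule ccontr)
    assume "\<not> zt rs ts \<le> 0"
    then obtain e where e: "e > 0" "\<forall>h>0. h < e \<longrightarrow> z rs (ts - h) < z rs ts"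
      using DERIV_pos_inc_left[OF dt[OF rsa rsR ts0 rsts(4)]] by auto
    define h where "h = min e ts / 2"
    have h: "0 < h" "h < e" "0 \<le> ts - h" "ts - h < ts" using h_def e ts0 by auto
    have "z rs (ts - h) < 0" using e z0 h by auto
    moreover have "z rs (ts - h) > 0" using before[OF rsts(1,2) h(3,4)] .
    ultimately show False by simp
  qed
  have zrr0: "zrr rs ts \<ge> 0"
  proof (rule ccontr)
    assume "\<not> zrr rs ts \<ge> 0"
    then obtain e where e: "e > 0" "\<forall>h>0. h < e \<longrightarrow> zr rs ts < zr (rs - h) ts"
      using DERIV_neg_dec_left[OF drr[OF rsa rsR ts0 rsts(4)]] by auto
    define h where "h = min e (rs - a) / 2"
    have h: "0 < h" "h < e" "a < rs - h" using h_def e rsa by auto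
    obtain \<xi> where xi: "rs - h < \<xi>" "\<xi> < rs" "z rs ts - z (rs - h) ts = (rs - (rs - h)) * zr \<xi> ts"
      using MVT2[of "rs - h" rs "\<lambda>s. z s ts" "\<lambda>s. zr s ts"] h rsR dr[OF _ _ ts0 rsts(4)] by force
    have "zr \<xi> ts > 0" using e(2)[rule_format, of "rs - \<xi>"] xi h zr0 by auto
    hence "h * zr \<xi> ts > 0" using h(1) by (rule mult_pos_pos[rotated])
    hence "z (rs - h) ts < 0" using xi z0 by simp
    moreover have "z (rs - h) ts \<ge> 0" using ge[of "rs - h"] h rsR by auto
    ultimately show False by simp
  qed
  show False using key[OF rsa rsR ts0 rsts(4) z0 zr0] zt0 zrr0 by simp
qed

lemma step:
  fixes N :: nat and a T M \<delta> \<epsilon> R t0 K \<mu> :: real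
    and u ur urr ut v vr vrr vt :: "real \<Rightarrow> real \<Rightarrow> real"
  assumes a0: "a > 0"
  and su: "classical_sol N a T u ur urr ut" and sv: "classical_sol N a T v vr vrr vt"
  and bd: "\<forall>(r, t) \<in> dom_aT a T. \<bar>u r t\<bar> \<le> M \<and> \<bar>v r t\<bar> \<le> M \<and> \<bar>r * vr r t\<bar> \<le> M"
  and t0: "0 \<le> t0" "t0 < T" and aR: "a < R" and dl: "\<delta> \<ge> 0" and ep: "\<epsilon> > 0"
  and K: "K = (2*N+1)*M + 1" and mu: "\<mu> = (2*N+1)*M + 2*N + 2*M + 6"
  and init: "\<And>r. a \<le> r \<Longrightarrow> r \<le> R \<Longrightarrow> v r 0 - u r 0 - \<delta> + \<epsilon>*(1+r\<^sup>2) > 0"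
  and bdry: "\<And>t. 0 \<le> t \<Longrightarrow> t \<le> t0 \<Longrightarrow>
     v a t - u a t - \<delta>*exp(-K*t) + \<epsilon>*exp(\<mu>*t)*(1+a\<^sup>2) > 0 \<and>
     v R t - u R t - \<delta>*exp(-K*t) + \<epsilon>*exp(\<mu>*t)*(1+R\<^sup>2) > 0"
  and r: "a \<le> r" "r \<le> R" and t: "0 \<le> t" "t \<le> t0"
  shows "v r t - u r t - \<delta>*exp(-K*t) + \<epsilon>*exp(\<mu>*t)*(1+r\<^sup>2) > 0"
proof -
  have M0: "M \<ge> 0" using bd a0 t0 unfolding dom_aT_def by force
  have cu: "C21_on a T u ur urr ut" and cv: "C21_on a T v vr vrr vt"
   and pu: "\<And>r t. (r, t) \<in> dom_aT a T \<Longrightarrow> ut r t = urr r t + (real N + 1) / r * ur r t + (real N * u r t + r * ur r t) * u r t"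
   and pv: "\<And>r t. (r, t) \<in> dom_aT a T \<Longrightarrow> vt r t = vrr r t + (real N + 1) / r * vr r t + (real N * v r t + r * vr r t) * v r t"
    using su sv unfolding classical_sol_def by auto
  have sub: "{a..R} \<times> {0..t0} \<subseteq> dom_aT a T" using t0 unfolding dom_aT_def by auto
  have cont1: "continuous_on ({a..R} \<times> {0..t0}) (\<lambda>p. f (fst p) (snd p))"
    if "continuous_on (dom_aT a T) (\<lambda>(r, t). f r t)" for f :: "real \<Rightarrow> real \<Rightarrow> real"
    using continuous_on_subset[OF that sub] by (simp add: case_prod_unfold)
  have cuv: "continuous_on ({a..R} \<times> {0..t0}) (\<lambda>p. u (fst p) (snd p))"
      "continuous_on ({a..R} \<times> {0..t0}) (\<lambda>p. v (fst p) (snd p))"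
    using cont1 cu cv unfolding C21_on_def by blast+
  have ders: "((\<lambda>s. f s t) has_real_derivative fr r t) (at r) \<and>
        ((\<lambda>s. fr s t) has_real_derivative frr r t) (at r) \<and>
        ((\<lambda>\<tau>. f r \<tau>) has_real_derivative ft r t) (at t)"
    if "C21_on a T f fr frr ft" "a < r" "0 < t" "t \<le> t0" for f fr frr ft r t
  proof -
    have "(r, t) \<in> dom_aT a T" using that t0 unfolding dom_aT_def by auto
    hence h: "((\<lambda>s. f s t) has_real_derivative fr r t) (at r within {a..})"
        "((\<lambda>s. fr s t) has_real_derivative frr r t) (at r within {a..})"
        "((\<lambda>\<tau>. f r \<tau>) has_real_derivative ft r t) (at t within {0..<T})"
      using that(1) unfolding C21_on_def by auto
    have e1: "at r within {a..} = at r" by (rule at_within_open_subset[of r "{a<..}"]) (use that in auto)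
    have e2: "at t within {0..<T} = at t" by (rule at_within_open_subset[of t "{0<..<T}"]) (use that t0 in auto)
    show ?thesis using h unfolding e1 e2 by auto
  qed
  show ?thesis
  proof (rule touch[where z = "\<lambda>r t. v r t - u r t - \<delta>*exp(-K*t) + \<epsilon>*exp(\<mu>*t)*(1+r\<^sup>2)"
        and zr = "\<lambda>r t. vr r t - ur r t + \<epsilon>*exp(\<mu>*t)*(2*r)"
        and zrr = "\<lambda>r t. vrr r t - urr r t + \<epsilon>*exp(\<mu>*t)*2"
        and zt = "\<lambda>r t. vt r t - ut r t + \<delta>*exp(-K*t)*K + \<epsilon>*exp(\<mu>*t)*\<mu>*(1+r\<^sup>2)"
        and a = a and R = R and tmax = t0 and r = r and t = t])
    show "a < R" "0 \<le> t0" "a \<le> r" "r \<le> R" "0 \<le> t" "t \<le> t0" using aR t0 r t by auto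
  next
    fix t assume "0 \<le> t" "t \<le> t0" thus "0 < v a t - u a t - \<delta>*exp(-K*t) + \<epsilon>*exp(\<mu>*t)*(1+a\<^sup>2) \<and> 0 < v R t - u R t - \<delta>*exp(-K*t) + \<epsilon>*exp(\<mu>*t)*(1+R\<^sup>2)" using bdry by auto
  next
    show "continuous_on ({a..R} \<times> {0..t0}) (\<lambda>p. v (fst p) (snd p) - u (fst p) (snd p) - \<delta>*exp(-K * snd p) + \<epsilon>*exp(\<mu> * snd p) * (1+(fst p)\<^sup>2))"
      using cuv by (intro continuous_intros) auto
  next
    fix r t assume rt: "a < r" "r < R" "0 < t" "t \<le> t0"
    note du = ders[OF cu rt(1,3,4)] and dv = ders[OF cv rt(1,3,4)]
    show "((\<lambda>s. v s t - u s t - \<delta>*exp(-K*t) + \<epsilon>*exp(\<mu>*t)*(1+s\<^sup>2)) has_real_derivative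
       vr r t - ur r t + \<epsilon>*exp(\<mu>*t)*(2*r)) (at r)"
      using du dv by (auto intro!: derivative_eq_intros)
  next
    fix r t assume rt: "a < r" "r < R" "0 < t" "t \<le> t0"
    note du = ders[OF cu rt(1,3,4)] and dv = ders[OF cv rt(1,3,4)]
    show "((\<lambda>s. vr s t - ur s t + \<epsilon>*exp(\<mu>*t)*(2 * s)) has_real_derivative
       vrr r t - urr r t + \<epsilon>*exp(\<mu>*t)*2) (at r)"
      using du dv by (auto intro!: derivative_eq_intros)
  next
    fix r t assume rt: "a < r" "r < R" "0 < t" "t \<le> t0"
    note du = ders[OF cu rt(1,3,4)] and dv = ders[OF cv rt(1,3,4)]
    show "((\<lambda>\<tau>. v r \<tau> - u r \<tau> - \<delta>*exp(-K*\<tau>) + \<epsilon>*exp(\<mu>*\<tau>)*(1+r\<^sup>2)) has_real_derivative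
       vt r t - ut r t + \<delta>*exp(-K*t)*K + \<epsilon>*exp(\<mu>*t)*\<mu>*(1+r\<^sup>2)) (at t)"
      using du dv by (auto intro!: derivative_eq_intros)
  next
    fix r assume "a \<le> r" "r \<le> R"
    thus "0 < v r 0 - u r 0 - \<delta>*exp(-K*0) + \<epsilon>*exp(\<mu>*0)*(1+r\<^sup>2)" using init by simp
  next
    fix r t assume rt: "a < r" "r < R" "0 < t" "t \<le> t0"
      and z0: "v r t - u r t - \<delta>*exp(-K*t) + \<epsilon>*exp(\<mu>*t)*(1+r\<^sup>2) = 0"
      and zr0: "vr r t - ur r t + \<epsilon>*exp(\<mu>*t)*(2*r) = 0"
    have dm: "(r, t) \<in> dom_aT a T" using rt t0 unfolding dom_aT_def by auto
    define E1 where "E1 = exp(-K*t)"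
    define E2 where "E2 = exp(\<mu>*t)"
    define b where "b = (real N + 1) / r + r * u r t"
    define c where "c = real N * (u r t + v r t) + r * vr r t"
    have r0: "r > 0" using rt a0 by auto
    have wt: "vt r t - ut r t = (vrr r t - urr r t) + b * (vr r t - ur r t) + c * (v r t - u r t)"
      using pu[OF dm] pv[OF dm] unfolding b_def c_def by (simp add: algebra_simps)
    have W: "v r t - u r t = \<delta>*E1 - \<epsilon>*E2*(1+r\<^sup>2)" using z0 unfolding E1_def E2_def by simp
    have Wr: "vr r t - ur r t = - \<epsilon>*E2*(2*r)" using zr0 unfolding E2_def by simp
    have rb: "r * b = real N + 1 + r\<^sup>2 * u r t" using r0 unfolding b_def
      by (simp add: field_simps power2_eq_square)
    have diff: "(vt r t - ut r t + \<delta>*E1*K + \<epsilon>*E2*\<mu>*(1+r\<^sup>2)) - (vrr r t - urr r t + \<epsilon>*E2*2)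
        = \<delta>*E1*(K + c) + \<epsilon>*E2*(\<mu>*(1+r\<^sup>2) - 2 - 2*(r*b) - c*(1+r\<^sup>2))"
      unfolding wt W Wr by (simp add: algebra_simps)
    have bu: "\<bar>u r t\<bar> \<le> M" "\<bar>v r t\<bar> \<le> M" "\<bar>r * vr r t\<bar> \<le> M" using bd dm by auto
    have "\<bar>real N * (u r t + v r t)\<bar> \<le> real N * (2*M)"
    proof -
      have "\<bar>u r t + v r t\<bar> \<le> 2*M" using bu abs_triangle_ineq[of "u r t" "v r t"] by linarith
      thus ?thesis unfolding abs_mult by (simp add: mult_left_mono)
    qed
    hence cb: "\<bar>c\<bar> \<le> (2*N+1)*M"
    proof -
      assume h: "\<bar>real N * (u r t + v r t)\<bar> \<le> real N * (2*M)"
      have "\<bar>c\<bar> \<le> \<bar>real N * (u r t + v r t)\<bar> + \<bar>r * vr r t\<bar>"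
        unfolding c_def by (rule abs_triangle_ineq)
      moreover have "real (2*N+1) * M = real N * (2*M) + M" by (simp add: algebra_simps)
      ultimately show ?thesis using h bu(3) by linarith
    qed
    show "vt r t - ut r t + \<delta>*exp(-K*t)*K + \<epsilon>*exp(\<mu>*t)*\<mu>*(1+r\<^sup>2) > vrr r t - urr r t + \<epsilon>*exp(\<mu>*t)*2"
    proof -
      define X where "X = r\<^sup>2"
      have X0: "X \<ge> 0" unfolding X_def by simp
      have c1: "c*(1+X) \<le> real (2*N+1)*M*(1+X)" using cb X0 by (intro mult_right_mono) auto
      have c2: "X * u r t \<le> X * M" using bu X0 by (intro mult_left_mono) auto
      define Q where "Q = real (2*N+1)*M*(1+X)"
      have e1: "\<mu>*(1+X) = Q + 2*real N + 2*M + 6 + 2*(real N * X) + 2*(M*X) + 6*X"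
        unfolding mu Q_def by (simp add: algebra_simps)
      have c2': "X * u r t \<le> M * X" using c2 by (simp add: mult.commute)
      have n1: "real N * X \<ge> 0" "M * X \<ge> 0" using X0 M0 by auto
      have "\<mu>*(1+X) - 2 - 2*(real N + 1 + X * u r t) - c*(1+X) > 0"
        using c1 c2' e1 n1 X0 M0 unfolding Q_def[symmetric] by (smt (verit))
      hence "\<mu>*(1+r\<^sup>2) - 2 - 2*(r*b) - c*(1+r\<^sup>2) > 0" unfolding rb X_def by (simp add: mult.commute)
      hence p2: "\<epsilon>*E2*(\<mu>*(1+r\<^sup>2) - 2 - 2*(r*b) - c*(1+r\<^sup>2)) > 0" using ep unfolding E2_def by simp
      have "K + c > 0" using cb K by auto
      hence p1: "\<delta>*E1*(K + c) \<ge> 0" using dl unfolding E1_def by simp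
      show ?thesis using diff p1 p2 unfolding E1_def E2_def by linarith
    qed
  qed
qed


lemma cont_slices:
  fixes f :: "real \<Rightarrow> real \<Rightarrow> real"
  assumes c: "continuous_on (dom_aT a T) (\<lambda>(r, t). f r t)" and t0: "0 \<le> t0" "t0 < T"
  shows "continuous_on {0..t0} (\<lambda>\<tau>. f a \<tau>)" "continuous_on {a..R} (\<lambda>s. f s 0)"
proof -
  have "continuous_on {0..t0} (\<lambda>\<tau>. (\<lambda>(r, t). f r t) (a, \<tau>))"
    by (rule continuous_on_compose2[OF c]) (use t0 in \<open>auto intro!: continuous_intros simp: dom_aT_def\<close>)
  thus "continuous_on {0..t0} (\<lambda>\<tau>. f a \<tau>)" by simp
  have "continuous_on {a..R} (\<lambda>s. (\<lambda>(r, t). f r t) (s, 0))"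
    by (rule continuous_on_compose2[OF c]) (use t0 in \<open>auto intro!: continuous_intros simp: dom_aT_def\<close>)
  thus "continuous_on {a..R} (\<lambda>s. f s 0)" by simp
qed

theorem lemma2p2:
  fixes N :: nat and a T :: real
    and u ur urr ut v vr vrr vt :: "real \<Rightarrow> real \<Rightarrow> real"
  assumes "N \<ge> 3" and "a > 0" and "T > 0"
    and "classical_sol N a T u ur urr ut"
    and "classical_sol N a T v vr vrr vt"
    and "\<forall>r\<ge>a. u r 0 < v r 0"
    and "\<forall>t. 0 \<le> t \<and> t < T \<longrightarrow> u a t < v a t"
    and "\<exists>M. \<forall>(r, t) \<in> dom_aT a T. \<bar>u r t\<bar> \<le> M \<and> \<bar>v r t\<bar> \<le> M \<and> \<bar>r * vr r t\<bar> \<le> M"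
  shows "\<forall>(r, t) \<in> dom_aT a T. u r t < v r t"
proof -
  note a0 = assms(2) and su = assms(4) and sv = assms(5)
  obtain M where bd: "\<forall>(r, t) \<in> dom_aT a T. \<bar>u r t\<bar> \<le> M \<and> \<bar>v r t\<bar> \<le> M \<and> \<bar>r * vr r t\<bar> \<le> M"
    using assms(8) by blast
  have M0: "M \<ge> 0" using bd a0 assms(3) unfolding dom_aT_def by force
  define K where "K = (2*N+1)*M + 1"
  define \<mu> where "\<mu> = (2*N+1)*M + 2*N + 2*M + 6"
  have K0: "K \<ge> 0" and mu0: "\<mu> \<ge> 0" using M0 unfolding K_def \<mu>_def by auto
  have pos0: "v s 0 - u s 0 > 0" if "a \<le> s" for s using assms(6) that by auto
  have posa: "v a \<tau> - u a \<tau> > 0" if "0 \<le> \<tau>" "\<tau> < T" for \<tau> using assms(7) that by auto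
  have Wlow: "v s \<tau> - u s \<tau> \<ge> -2*M" if "a \<le> s" "0 \<le> \<tau>" "\<tau> < T" for s \<tau>
  proof -
    have "(s, \<tau>) \<in> dom_aT a T" using that unfolding dom_aT_def by auto
    thus ?thesis using bd by auto
  qed
  have expge: "exp(\<mu>*\<tau>) \<ge> 1" if "0 \<le> \<tau>" for \<tau> using mu0 that by simp
  have exple: "exp(-K*\<tau>) \<le> 1" if "0 \<le> \<tau>" for \<tau> using K0 that by simp
  have weak: "v r t - u r t \<ge> 0" if rt: "a \<le> r" "0 \<le> t" "t < T" for r t
  proof (rule ccontr)
    assume neg: "\<not> v r t - u r t \<ge> 0"
    define E where "E = exp(\<mu>*t)*(1+r\<^sup>2)"
    have E0: "E > 0" unfolding E_def by (simp add: add_pos_nonneg)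
    define \<epsilon> where "\<epsilon> = (u r t - v r t)/(2*E)"
    have ep: "\<epsilon> > 0" unfolding \<epsilon>_def using neg E0 by simp
    define R where "R = a + r + 1 + 2*M/\<epsilon>"
    have MR: "2*M/\<epsilon> \<ge> 0" using M0 ep by simp
    have R1: "R \<ge> 1" "a < R" "r \<le> R" using MR a0 rt unfolding R_def by auto
    have "R\<^sup>2 \<ge> R" using R1 by (simp add: power2_eq_square)
    moreover have "R \<ge> 2*M/\<epsilon>" using a0 rt unfolding R_def by linarith
    ultimately have "\<epsilon> * R\<^sup>2 \<ge> \<epsilon> * (2*M/\<epsilon>)" using ep
      by (intro mult_left_mono) auto
    hence epR: "\<epsilon> * (1 + R\<^sup>2) > 2*M" using ep by (simp add: algebra_simps)
    have "v r t - u r t - 0*exp(-K*t) + \<epsilon>*exp(\<mu>*t)*(1+r\<^sup>2) > 0"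
    proof (rule step[OF a0 su sv bd _ _ _ _ ep K_def \<mu>_def])
      show "0 \<le> t" "0 \<le> t" "t < T" "a < R" "(0::real) \<le> 0" "a \<le> r" "r \<le> R" "t \<le> t" using rt R1 by auto
    next
      fix s assume "a \<le> s" "s \<le> R"
      thus "v s 0 - u s 0 - 0 + \<epsilon> * (1 + s\<^sup>2) > 0" using pos0[of s] ep
        by (simp add: add_pos_nonneg)
    next
      fix \<tau> assume tau: "0 \<le> \<tau>" "\<tau> \<le> t"
      have p1: "\<epsilon> * exp(\<mu>*\<tau>) * (1 + a\<^sup>2) > 0" using ep by (simp add: add_pos_nonneg)
      have "\<epsilon> * exp(\<mu>*\<tau>) * (1 + R\<^sup>2) \<ge> \<epsilon> * 1 * (1 + R\<^sup>2)"
        using expge[OF tau(1)] ep by (intro mult_right_mono mult_left_mono) auto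
      hence p2: "\<epsilon> * exp(\<mu>*\<tau>) * (1 + R\<^sup>2) > 2*M" using epR by simp
      show "v a \<tau> - u a \<tau> - 0*exp(-K*\<tau>) + \<epsilon>*exp(\<mu>*\<tau>)*(1+a\<^sup>2) > 0 \<and>
            v R \<tau> - u R \<tau> - 0*exp(-K*\<tau>) + \<epsilon>*exp(\<mu>*\<tau>)*(1+R\<^sup>2) > 0"
        using posa[of \<tau>] Wlow[of R \<tau>] p1 p2 tau rt R1 by auto
    qed
    moreover have "\<epsilon>*exp(\<mu>*t)*(1+r\<^sup>2) = (u r t - v r t)/2"
      unfolding \<epsilon>_def using E0 by (simp add: E_def[symmetric] mult.assoc)
    ultimately show False using neg by (simp add: field_simps)
  qed
  show ?thesis
  proof (clarsimp simp: dom_aT_def)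
    fix r0 t0 assume rt: "a \<le> r0" "0 \<le> t0" "t0 < T"
    define E1 where "E1 = exp(-K*t0)"
    define E2 where "E2 = exp(\<mu>*t0)*(1+r0\<^sup>2)"
    have E1p: "E1 > 0" unfolding E1_def by simp
    have E2p: "E2 > 0" unfolding E2_def by (simp add: add_pos_nonneg)
    define c0 where "c0 = E1/(2*E2)"
    have c0p: "c0 > 0" unfolding c0_def using E1p E2p by simp
    define R where "R = a + r0 + 1 + 1/c0"
    have "1/c0 > 0" using c0p by simp
    hence R1: "R \<ge> 1" "a < R" "r0 \<le> R" "R \<ge> 1/c0" using a0 rt unfolding R_def by linarith+
    have "R\<^sup>2 \<ge> R" using R1 by (simp add: power2_eq_square)
    hence "c0 * R\<^sup>2 \<ge> c0 * (1/c0)" using R1 c0p by (intro mult_left_mono) auto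
    hence c0R: "c0 * (1 + R\<^sup>2) > 1" using c0p by (simp add: algebra_simps)
    have cu: "continuous_on (dom_aT a T) (\<lambda>(r, t). u r t)" and cv: "continuous_on (dom_aT a T) (\<lambda>(r, t). v r t)"
      using su sv unfolding classical_sol_def C21_on_def by auto
    have c1: "continuous_on {0..t0} (\<lambda>\<tau>. v a \<tau> - u a \<tau>)"
      using cont_slices(1)[OF cu rt(2,3)] cont_slices(1)[OF cv rt(2,3)] by (intro continuous_intros)
    have c2: "continuous_on {a..R} (\<lambda>s. v s 0 - u s 0)"
      using cont_slices(2)[OF cu rt(2,3)] cont_slices(2)[OF cv rt(2,3)] by (intro continuous_intros)
    obtain \<tau>1 where t1: "\<tau>1 \<in> {0..t0}" "\<forall>\<tau>\<in>{0..t0}. v a \<tau>1 - u a \<tau>1 \<le> v a \<tau> - u a \<tau>"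
      using continuous_attains_inf[OF compact_Icc _ c1] rt by auto
    obtain s2 where s2: "s2 \<in> {a..R}" "\<forall>s\<in>{a..R}. v s2 0 - u s2 0 \<le> v s 0 - u s 0"
      using continuous_attains_inf[OF compact_Icc _ c2] R1 by auto
    define m1 where "m1 = v a \<tau>1 - u a \<tau>1"
    define m2 where "m2 = v s2 0 - u s2 0"
    have m1p: "m1 > 0" unfolding m1_def using posa[of \<tau>1] t1 rt by auto
    have m2p: "m2 > 0" unfolding m2_def using pos0[of s2] s2 by auto
    define \<delta> where "\<delta> = min m1 m2 / 2"
    have dp: "\<delta> > 0" "\<delta> < m1" "\<delta> < m2" using m1p m2p unfolding \<delta>_def by auto
    define \<epsilon> where "\<epsilon> = \<delta> * c0"
    have ep: "\<epsilon> > 0" unfolding \<epsilon>_def using dp c0p by simp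
    have epR: "\<epsilon> * (1 + R\<^sup>2) > \<delta>" unfolding \<epsilon>_def using c0R dp
      by (metis mult.assoc mult.right_neutral mult_strict_left_mono)
    have main: "v r0 t0 - u r0 t0 - \<delta>*exp(-K*t0) + \<epsilon>*exp(\<mu>*t0)*(1+r0\<^sup>2) > 0"
    proof (rule step[OF a0 su sv bd _ _ _ _ ep K_def \<mu>_def])
      show "0 \<le> t0" "0 \<le> t0" "t0 < T" "a < R" "0 \<le> \<delta>" "a \<le> r0" "r0 \<le> R" "t0 \<le> t0" using rt R1 dp by auto
    next
      fix s assume s: "a \<le> s" "s \<le> R"
      have "v s 0 - u s 0 \<ge> m2" using s2 s unfolding m2_def by auto
      thus "v s 0 - u s 0 - \<delta> + \<epsilon> * (1 + s\<^sup>2) > 0" using dp ep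
        by (smt (verit) mult_pos_pos zero_le_power2)
    next
      fix \<tau> assume tau: "0 \<le> \<tau>" "\<tau> \<le> t0"
      have p1: "\<epsilon> * exp(\<mu>*\<tau>) * (1 + a\<^sup>2) > 0" using ep by (simp add: add_pos_nonneg)
      have "\<epsilon> * exp(\<mu>*\<tau>) * (1 + R\<^sup>2) \<ge> \<epsilon> * 1 * (1 + R\<^sup>2)"
        using expge[OF tau(1)] ep by (intro mult_right_mono mult_left_mono) auto
      hence p2: "\<epsilon> * exp(\<mu>*\<tau>) * (1 + R\<^sup>2) > \<delta>" using epR by simp
      have p3: "\<delta>*exp(-K*\<tau>) \<le> \<delta>" using exple[OF tau(1)] dp by (simp add: mult_left_le)
      have wa: "v a \<tau> - u a \<tau> \<ge> m1" using t1 tau unfolding m1_def by auto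
      have wR: "v R \<tau> - u R \<tau> \<ge> 0" using weak[of R \<tau>] R1 tau rt by auto
      show "v a \<tau> - u a \<tau> - \<delta>*exp(-K*\<tau>) + \<epsilon>*exp(\<mu>*\<tau>)*(1+a\<^sup>2) > 0 \<and>
            v R \<tau> - u R \<tau> - \<delta>*exp(-K*\<tau>) + \<epsilon>*exp(\<mu>*\<tau>)*(1+R\<^sup>2) > 0"
        using p1 p2 p3 wa wR dp by linarith
    qed
    have "\<epsilon>*exp(\<mu>*t0)*(1+r0\<^sup>2) = \<delta> * E1 / 2"
      unfolding \<epsilon>_def c0_def using E2p by (simp add: E2_def[symmetric] mult.assoc)
    hence "v r0 t0 - u r0 t0 > \<delta> * E1 / 2" using main unfolding E1_def by simp
    moreover have "\<delta> * E1 / 2 > 0" using dp E1p by simp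
    ultimately show "u r0 t0 < v r0 t0" by simp
  qed
qed

end
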